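(* Let $P=\sum_{k=0}^nq^kP_k(D)\in\mathbb{C}[q][D]$ with $D=q\frac{d}{dq}$, and let $\widetilde P=\sum_{k=0}^nq^kP_k(D)(D+1)(D+2)\cdots(D+k)$. Fix $N\geq0$ and let $R=\mathbb{C}[\varepsilon]/(\varepsilon^{N+1})$. If $I=\sum_{i,j}a_{ij}q^i\varepsilon^j\in\mathbb{C}[[q]]\otimes R$ is a perturbed solution of $P$, then $$\widetilde I=\sum_{i,j}a_{ij}q^i\varepsilon^j(\varepsilon+1)(\varepsilon+2)\cdots(\varepsilon+i)$$ is a perturbed solution of $\widetilde P$.
   Context: Write a series $J\in\mathbb{C}[[q]]\otimes R$ as $J=\sum_{j=0}^NJ^j(q)\varepsilon^j$ and put $J_r=\sum_{m=0}^rJ^{r-m}(q)\,t^m/m!\in\mathbb{C}[[q]][t]$. Operators act on $\mathbb{C}[[q]][t]$ via $D(f(q)t^m)=qf'(q)t^m+mf(q)t^{m-1}$, with $q$ acting by multiplication. $J$ is a perturbed solution of an operator $Q$ if $QJ_r=0$ for all $0\leq r\leq N$. *)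

theory Defs
  imports "HOL-Computational_Algebra.Computational_Algebra"
begin

text \<open>Elements of C[[q]][t] are modelled as complex fps poly (polynomials in t with
  coefficients power series in q).  The operator D acts by
  D(f t^m) = q f'(q) t^m + m f t^(m-1).\<close>

definition Dop :: "complex fps poly \<Rightarrow> complex fps poly" where
  "Dop p = map_poly (\<lambda>f. fps_X * fps_deriv f) p + pderiv p"

definition polyD :: "complex poly \<Rightarrow> complex fps poly \<Rightarrow> complex fps poly" where
  "polyD p g = (\<Sum>l\<le>degree p. smult (fps_const (coeff p l)) ((Dop ^^ l) g))"

definition applyOp :: "nat \<Rightarrow> (nat \<Rightarrow> complex poly) \<Rightarrow> complex fps poly \<Rightarrow> complex fps poly" where
  "applyOp n Ps g = (\<Sum>k\<le>n. smult (fps_X ^ k) (polyD (Ps k) g))"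

text \<open>A series J in C[[q]] tensor C[eps]/(eps^(N+1)) is given by its components J j = J^j(q),
  j = 0..N.  J_r = sum_{m=0}^r J^{r-m}(q) t^m / m!.\<close>
definition Jr :: "(nat \<Rightarrow> complex fps) \<Rightarrow> nat \<Rightarrow> complex fps poly" where
  "Jr J r = (\<Sum>m\<le>r. monom (fps_const (1 / fact m) * J (r - m)) m)"

definition perturbed_solution :: "nat \<Rightarrow> nat \<Rightarrow> (nat \<Rightarrow> complex poly) \<Rightarrow> (nat \<Rightarrow> complex fps) \<Rightarrow> bool" where
  "perturbed_solution N n Ps J \<longleftrightarrow> (\<forall>r\<le>N. applyOp n Ps (Jr J r) = 0)"

definition rising :: "nat \<Rightarrow> complex poly" where
  "rising k = (\<Prod>l\<in>{1..k}. [:of_nat l, 1:])"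

definition Ptilde :: "(nat \<Rightarrow> complex poly) \<Rightarrow> nat \<Rightarrow> complex poly" where
  "Ptilde Ps k = Ps k * rising k"

text \<open>I-tilde: the eps^j-component of sum a_ij q^i eps^j (eps+1)...(eps+i) in R,
  where a_ij = fps_nth (I j) i.\<close>
definition Itilde :: "(nat \<Rightarrow> complex fps) \<Rightarrow> nat \<Rightarrow> complex fps" where
  "Itilde I j = Abs_fps (\<lambda>i. \<Sum>j'\<le>j. fps_nth (I j') i * coeff (rising i) (j - j'))"

end

theory Submission
  imports Defs
begin

lemma coeff_Jr: "coeff (Jr J r) m = (if m \<le> r then fps_const (1 / fact m) * J (r - m) else 0)"
  unfolding Jr_def by (simp add: coeff_sum coeff_monom)

definition DJ :: "(nat \<Rightarrow> complex fps) \<Rightarrow> nat \<Rightarrow> complex fps" where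
  "DJ J j = fps_X * fps_deriv (J j) + (if j = 0 then 0 else J (j - 1))"

lemma coeff_Dop: "coeff (Dop p) m = fps_X * fps_deriv (coeff p m) + of_nat (Suc m) * coeff p (Suc m)"
  unfolding Dop_def by (simp add: coeff_map_poly coeff_pderiv)

lemma Dop_Jr: "Dop (Jr J r) = Jr (DJ J) r"
proof (rule poly_eqI)
  fix m
  show "coeff (Dop (Jr J r)) m = coeff (Jr (DJ J) r) m"
  proof (cases "m \<le> r")
    case True
    have f: "of_nat (Suc m) * fps_const (1 / fact (Suc m)) = (fps_const (1 / fact m) :: complex fps)"
    proof -
      have "of_nat (Suc m) * fps_const (1 / fact (Suc m)) = fps_const (of_nat (Suc m) * (1 / fact (Suc m)) :: complex)"
        by (simp only: fps_of_nat[symmetric] fps_const_mult)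
      also have "of_nat (Suc m) * (1 / fact (Suc m)) = (1 / fact m :: complex)"
      proof -
        have "(fact (Suc m)::complex) = of_nat (Suc m) * fact m" by (rule fact_Suc)
        moreover have "(of_nat (Suc m)::complex) \<noteq> 0" by (simp only: of_nat_eq_0_iff)
        moreover have "(fact m::complex) \<noteq> 0" by simp
        ultimately show ?thesis by (simp del: of_nat_Suc)
      qed
      finally show ?thesis .
    qed
    have g: "of_nat (Suc m) * (fps_const (1/fact(Suc m)) * K) = fps_const (1/fact m) * K" for K :: "complex fps"
      using f by (simp only: mult.assoc[symmetric])
    show ?thesis using True
      apply (cases "m = r")
       apply (simp add: coeff_Dop coeff_Jr DJ_def)
      apply (simp add: coeff_Dop coeff_Jr DJ_def g del: fact_Suc of_nat_Suc)
      apply (simp add: algebra_simps Suc_diff_Suc)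
      done
  qed (simp add: coeff_Dop coeff_Jr)
qed

lemma Dop_pow_Jr: "(Dop ^^ l) (Jr J r) = Jr ((DJ ^^ l) J) r"
  by (induction l) (simp_all add: Dop_Jr)

lemma Jr_smult: "smult c (Jr J r) = Jr (\<lambda>j. c * J j) r"
  by (rule poly_eqI) (simp add: coeff_Jr algebra_simps)

lemma Jr_sum: "finite S \<Longrightarrow> (\<Sum>x\<in>S. Jr (F x) r) = Jr (\<lambda>j. \<Sum>x\<in>S. F x j) r"
  by (rule poly_eqI) (simp add: coeff_Jr coeff_sum sum_distrib_left)

definition KJ :: "nat \<Rightarrow> (nat \<Rightarrow> complex poly) \<Rightarrow> (nat \<Rightarrow> complex fps) \<Rightarrow> nat \<Rightarrow> complex fps" where
  "KJ n Ps J j = (\<Sum>k\<le>n. fps_X ^ k * (\<Sum>l\<le>degree (Ps k). fps_const (coeff (Ps k) l) * (DJ ^^ l) J j))"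

lemma applyOp_Jr: "applyOp n Ps (Jr J r) = Jr (KJ n Ps J) r"
  unfolding applyOp_def polyD_def KJ_def Dop_pow_Jr
  by (simp add: Jr_smult Jr_sum sum_distrib_left)

lemma perturbed_iff: "perturbed_solution N n Ps J \<longleftrightarrow> (\<forall>j\<le>N. KJ n Ps J j = 0)"
proof
  assume "perturbed_solution N n Ps J"
  then have "\<forall>r\<le>N. Jr (KJ n Ps J) r = 0" by (simp add: perturbed_solution_def applyOp_Jr)
  then show "\<forall>j\<le>N. KJ n Ps J j = 0"
    by (metis (no_types, lifting) coeff_Jr coeff_0 diff_zero fact_0 div_by_1 fps_const_1_eq_1 le0 mult_1)
next
  assume "\<forall>j\<le>N. KJ n Ps J j = 0"
  then show "perturbed_solution N n Ps J"
    unfolding perturbed_solution_def applyOp_Jr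
    by (auto intro!: poly_eqI simp: coeff_Jr)
qed

definition Ser :: "(nat \<Rightarrow> complex fps) \<Rightarrow> nat \<Rightarrow> complex fps" where
  "Ser J i = Abs_fps (\<lambda>j. J j $ i)"

lemma Ser_nth: "Ser J i $ j = J j $ i"
  by (simp add: Ser_def)

lemma Ser_DJ: "Ser (DJ J) i = (fps_const (of_nat i) + fps_X) * Ser J i"
proof (rule fps_ext)
  fix j
  show "Ser (DJ J) i $ j = ((fps_const (of_nat i) + fps_X) * Ser J i) $ j"
    by (cases i) (auto simp: Ser_nth DJ_def distrib_right)
qed

lemma Ser_DJ_pow: "Ser ((DJ ^^ l) J) i = (fps_const (of_nat i) + fps_X) ^ l * Ser J i"
  by (induction l) (simp_all add: Ser_DJ)

lemma DJ_pow_nth: "(DJ ^^ l) J j $ i = ((fps_const (of_nat i) + fps_X) ^ l * Ser J i) $ j"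
  by (metis Ser_DJ_pow Ser_nth)

definition EV :: "nat \<Rightarrow> complex poly \<Rightarrow> complex fps" where
  "EV c p = (\<Sum>l\<le>degree p. fps_const (coeff p l) * (fps_const (of_nat c) + fps_X) ^ l)"

lemma Ser_KJ: "Ser (KJ n Ps J) m = (\<Sum>k\<le>n. if k \<le> m then EV (m - k) (Ps k) * Ser J (m - k) else 0)"
proof (rule fps_ext)
  fix j
  show "Ser (KJ n Ps J) m $ j = (\<Sum>k\<le>n. if k \<le> m then EV (m - k) (Ps k) * Ser J (m - k) else 0) $ j"
    unfolding Ser_nth KJ_def EV_def
    by (auto simp: fps_sum_nth fps_X_power_mult_nth DJ_pow_nth sum_distrib_right mult.assoc intro!: sum.cong)
qed

lemma pcompose_sum_form: "pcompose p q = (\<Sum>l\<le>degree p. smult (coeff p l) (q ^ l))"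
proof -
  have d: "degree (map_poly (\<lambda>x. [:x:]) p) = degree p"
    by (rule degree_map_poly) simp
  show ?thesis
    unfolding pcompose_altdef poly_altdef d
    by (simp add: coeff_map_poly)
qed

lemma EV_alt: "EV c p = fps_of_poly (pcompose p [:of_nat c, 1:])"
  unfolding EV_def pcompose_sum_form
  by (simp add: fps_of_poly_sum fps_of_poly_smult fps_of_poly_power fps_of_poly_pCons fps_of_nat)

lemma EV_mult: "EV c (p * q) = EV c p * EV c q"
  by (simp add: EV_alt pcompose_mult fps_of_poly_mult)

lemma rising_shift: "pcompose (rising k) [:of_nat i, 1:] * rising i = rising (i + k)"
proof -
  have "pcompose (rising k) [:of_nat i, 1:] = (\<Prod>l\<in>{1..k}. [:of_nat (l + i), 1:])"
    unfolding rising_def pcompose_prod by (simp add: pcompose_pCons algebra_simps)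
  also have "\<dots> = (\<Prod>l\<in>{i+1..i+k}. [:of_nat l, 1:])"
    using prod.shift_bounds_cl_nat_ivl[of "\<lambda>l. [:of_nat l, 1:] :: complex poly" 1 i k]
    by (simp add: add.commute)
  finally have "pcompose (rising k) [:of_nat i, 1:] * rising i
      = (\<Prod>l\<in>{i+1..i+k}. [:of_nat l, 1:]) * (\<Prod>l\<in>{1..i}. [:of_nat l, 1:])"
    by (simp add: rising_def)
  also have "\<dots> = (\<Prod>l\<in>{i+1..i+k} \<union> {1..i}. [:of_nat l, 1:])"
    by (rule prod.union_disjoint[symmetric]) auto
  also have "{i+1..i+k} \<union> {1..i} = {1..i+k}" by auto
  finally show ?thesis by (simp add: rising_def)
qed

lemma EV_rising: "EV i (rising k) * fps_of_poly (rising i) = fps_of_poly (rising (i + k))"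
  by (simp add: EV_alt fps_of_poly_mult[symmetric] rising_shift)

lemma Ser_Itilde: "Ser (Itilde I) i = Ser I i * fps_of_poly (rising i)"
  by (rule fps_ext) (simp add: Ser_nth Itilde_def fps_mult_nth atLeast0AtMost)

lemma Ser_KJ_tilde:
  "Ser (KJ n (Ptilde Ps) (Itilde I)) m = fps_of_poly (rising m) * Ser (KJ n Ps I) m"
  unfolding Ser_KJ sum_distrib_left
proof (rule sum.cong)
  fix k assume "k \<in> {..n}"
  show "(if k \<le> m then EV (m - k) (Ptilde Ps k) * Ser (Itilde I) (m - k) else 0) =
        fps_of_poly (rising m) * (if k \<le> m then EV (m - k) (Ps k) * Ser I (m - k) else 0)"
  proof (cases "k \<le> m")
    case True
    have "EV (m - k) (Ptilde Ps k) * Ser (Itilde I) (m - k)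
        = EV (m - k) (Ps k) * Ser I (m - k) * (EV (m - k) (rising k) * fps_of_poly (rising (m - k)))"
      by (simp add: Ptilde_def EV_mult Ser_Itilde algebra_simps)
    also have "EV (m - k) (rising k) * fps_of_poly (rising (m - k)) = fps_of_poly (rising m)"
      using True by (simp add: EV_rising)
    finally show ?thesis using True by (simp add: algebra_simps)
  qed simp
qed simp

theorem corollary2p2p5:
  fixes N n :: nat and Ps :: "nat \<Rightarrow> complex poly" and I :: "nat \<Rightarrow> complex fps"
  assumes "perturbed_solution N n Ps I"
  shows "perturbed_solution N n (Ptilde Ps) (Itilde I)"
proof -
  have K: "\<forall>j\<le>N. KJ n Ps I j = 0" using assms perturbed_iff by blast
  have "KJ n (Ptilde Ps) (Itilde I) j = 0" if "j \<le> N" for j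
  proof (rule fps_ext)
    fix m
    have "KJ n (Ptilde Ps) (Itilde I) j $ m = (fps_of_poly (rising m) * Ser (KJ n Ps I) m) $ j"
      by (metis Ser_KJ_tilde Ser_nth)
    also have "\<dots> = 0"
      unfolding fps_mult_nth using K that by (auto simp: Ser_nth intro!: sum.neutral)
    finally show "KJ n (Ptilde Ps) (Itilde I) j $ m = 0 $ m" by simp
  qed
  then show ?thesis using perturbed_iff by blast
qed

end
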